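(* Let $X$ be a Banach lattice with order continuous norm, and let $S$ be a convex $C_0$-semigroup on $X$ with generator $A\colon D(A)\subset X\to X$. Let $y\colon[0,\infty)\to X$ be a continuous function such that $y(t)\in D(A)$ for all $t\ge 0$ and $\lim_{h\downarrow 0}\frac{y(t+h)-y(t)}{h}=Ay(t)$ for all $t\ge 0$. Then $y(t)=S(t)x$ for all $t\ge 0$, where $x:=y(0)$.
   Context: A Banach lattice $X$ has order continuous norm if $\|x_\alpha\|\to 0$ for every net $x_\alpha\downarrow 0$. An operator $T\colon X\to X$ is convex if $T(\lambda x+(1-\lambda)y)\le \lambda Tx+(1-\lambda)Ty$ for all $x,y$, $\lambda\in[0,1]$, and bounded if $\sup_{\|x\|\le r}\|Tx\|<\infty$ for all $r>0$. A convex $C_0$-semigroup is a family $(S(t))_{t\ge0}$ of bounded convex operators $X\to X$ with $S(0)=\mathrm{id}$, $S(t+s)=S(t)S(s)$ for all $s,t\ge0$, and $S(t)x\to x$ as $t\downarrow 0$ for all $x$. Its generator is $Ax:=\lim_{h\downarrow 0}\frac{S(h)x-x}{h}$ with domain $D(A)$ the set of $x$ for which this norm limit exists. *)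

theory Defs
  imports "HOL-Analysis.Analysis"
begin

class banach_lattice = banach + ordered_real_vector + lattice +
  assumes lattice_norm: "sup x (- x) \<le> sup y (- y) \<Longrightarrow> norm x \<le> norm y"

text \<open>Order continuous norm: for every downward directed family x_\<alpha> \<down> 0
  (i.e. a decreasing net, indexed by the downward directed set D of its values
  with the reversed order, whose infimum is 0) we have norm x_\<alpha> \<rightarrow> 0 along
  the net.\<close>
definition order_continuous_norm :: "'a::banach_lattice itself \<Rightarrow> bool" where
  "order_continuous_norm _ \<longleftrightarrow>
    (\<forall>D::'a set.
       (D \<noteq> {} \<and> (\<forall>a\<in>D. \<forall>b\<in>D. \<exists>c\<in>D. c \<le> a \<and> c \<le> b)
        \<and> (\<forall>d\<in>D. 0 \<le> d) \<and> (\<forall>z. (\<forall>d\<in>D. z \<le> d) \<longrightarrow> z \<le> 0))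
       \<longrightarrow> (\<forall>\<epsilon>>0. \<exists>d0\<in>D. \<forall>d\<in>D. d \<le> d0 \<longrightarrow> norm d < \<epsilon>))"

definition convex_operator :: "('a::banach_lattice \<Rightarrow> 'a) \<Rightarrow> bool" where
  "convex_operator T \<longleftrightarrow>
    (\<forall>x y. \<forall>c::real. 0 \<le> c \<and> c \<le> 1 \<longrightarrow>
       T (c *\<^sub>R x + (1 - c) *\<^sub>R y) \<le> c *\<^sub>R T x + (1 - c) *\<^sub>R T y)"

definition bounded_operator :: "('a::real_normed_vector \<Rightarrow> 'b::real_normed_vector) \<Rightarrow> bool" where
  "bounded_operator T \<longleftrightarrow> (\<forall>r>0. \<exists>C. \<forall>x. norm x \<le> r \<longrightarrow> norm (T x) \<le> C)"

text \<open>Convex C_0-semigroup; S t is only relevant for t \<ge> 0.\<close>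
definition convex_C0_semigroup :: "(real \<Rightarrow> 'a::banach_lattice \<Rightarrow> 'a) \<Rightarrow> bool" where
  "convex_C0_semigroup S \<longleftrightarrow>
    (\<forall>t\<ge>0. convex_operator (S t) \<and> bounded_operator (S t))
    \<and> S 0 = id
    \<and> (\<forall>s\<ge>0. \<forall>t\<ge>0. S (t + s) = S t \<circ> S s)
    \<and> (\<forall>x. ((\<lambda>t. S t x) \<longlongrightarrow> x) (at_right 0))"

definition gen_domain :: "(real \<Rightarrow> 'a::real_normed_vector \<Rightarrow> 'a) \<Rightarrow> 'a set" where
  "gen_domain S = {x. \<exists>L. ((\<lambda>h. (1 / h) *\<^sub>R (S h x - x)) \<longlongrightarrow> L) (at_right 0)}"

definition generator :: "(real \<Rightarrow> 'a::real_normed_vector \<Rightarrow> 'a) \<Rightarrow> 'a \<Rightarrow> 'a" where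
  "generator S x = Lim (at_right 0) (\<lambda>h. (1 / h) *\<^sub>R (S h x - x))"

end

theory Submission
  imports Defs
begin

lemma bl_abs_nonneg:
  fixes x :: "'a::banach_lattice"
  shows "0 \<le> sup x (-x)"
proof -
  have "x + -x \<le> sup x (-x) + sup x (-x)" by (intro add_mono) simp_all
  then have "0 \<le> 2 *\<^sub>R sup x (-x)" by (simp add: scaleR_2)
  then have "(1/2) *\<^sub>R 0 \<le> (1/2::real) *\<^sub>R (2 *\<^sub>R sup x (-x))" by (intro scaleR_left_mono) auto
  then show ?thesis by simp
qed

lemma bl_abs_of_nonneg:
  fixes p :: "'a::banach_lattice"
  assumes "0 \<le> p" shows "sup p (-p) = p"
  using assms by (intro sup_absorb1) (meson neg_le_0_iff_le order_trans)

lemma bl_norm_abs: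
  fixes x :: "'a::banach_lattice"
  shows "norm (sup x (-x)) = norm x"
proof (rule antisym)
  have a: "sup (sup x (-x)) (- sup x (-x)) = sup x (-x)"
    by (rule bl_abs_of_nonneg[OF bl_abs_nonneg])
  show "norm (sup x (-x)) \<le> norm x" by (rule lattice_norm) (simp only: a order_refl)
  show "norm x \<le> norm (sup x (-x))" by (rule lattice_norm) (simp only: a order_refl)
qed

lemma bl_nb:
  fixes a u v :: "'a::banach_lattice"
  assumes "a \<le> u" "-a \<le> v"
  shows "norm a \<le> norm u + norm v"
proof -
  let ?w = "sup u (-u) + sup v (-v)"
  have w0: "0 \<le> ?w" using bl_abs_nonneg[of u] bl_abs_nonneg[of v] by (rule add_nonneg_nonneg)
  have "a \<le> ?w" using assms(1) bl_abs_nonneg[of v] by (meson add_increasing2 order_trans sup_ge1)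
  moreover have "-a \<le> ?w" using assms(2) bl_abs_nonneg[of u] by (meson add_increasing order_trans sup_ge1)
  ultimately have "sup a (-a) \<le> sup ?w (- ?w)" using bl_abs_of_nonneg[OF w0] by simp
  then have "norm a \<le> norm ?w" by (rule lattice_norm)
  also have "\<dots> \<le> norm (sup u (-u)) + norm (sup v (-v))" by (rule norm_triangle_ineq)
  finally show ?thesis by (simp add: bl_norm_abs)
qed

lemma conv_app:
  assumes "convex_operator T" "0 \<le> c" "c \<le> 1"
  shows "T (c *\<^sub>R x + (1 - c) *\<^sub>R y) \<le> c *\<^sub>R T x + (1 - c) *\<^sub>R T y"
  using assms unfolding convex_operator_def by blast

lemma conv_C1:
  assumes "convex_operator T" "0 \<le> c" "c \<le> 1"
  shows "T (x + c *\<^sub>R h) - T x \<le> c *\<^sub>R (T (x + h) - T x)"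
proof -
  have "T (c *\<^sub>R (x + h) + (1 - c) *\<^sub>R x) \<le> c *\<^sub>R T (x+h) + (1 - c) *\<^sub>R T x"
    by (rule conv_app[OF assms])
  moreover have "c *\<^sub>R (x + h) + (1 - c) *\<^sub>R x = x + c *\<^sub>R h" by (simp add: algebra_simps)
  moreover have "c *\<^sub>R T (x+h) + (1 - c) *\<^sub>R T x - T x = c *\<^sub>R (T (x + h) - T x)"
    by (simp add: algebra_simps)
  ultimately show ?thesis by (metis diff_right_mono)
qed

lemma conv_half:
  assumes "convex_operator T"
  shows "T x + T x \<le> T (x + h) + T (x - h)"
proof -
  have "T ((1/2) *\<^sub>R (x + h) + (1 - 1/2) *\<^sub>R (x - h)) \<le> (1/2) *\<^sub>R T (x + h) + (1 - 1/2) *\<^sub>R T (x - h)"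
    by (rule conv_app[OF assms]) auto
  moreover have "(1/2) *\<^sub>R (x + h) + (1 - 1/2) *\<^sub>R (x - h) = ((1/2) + (1/2::real)) *\<^sub>R x"
    by (simp only: scaleR_add_right scaleR_diff_right scaleR_add_left) (simp add: algebra_simps)
  then have "(1/2) *\<^sub>R (x + h) + (1 - 1/2) *\<^sub>R (x - h) = x" by simp
  ultimately have "T x \<le> (1/2) *\<^sub>R (T (x + h) + T (x - h))" by (simp add: scaleR_right_distrib)
  then have "2 *\<^sub>R T x \<le> (2::real) *\<^sub>R ((1/2) *\<^sub>R (T (x + h) + T (x - h)))"
    by (rule scaleR_left_mono) auto
  then show ?thesis by (simp add: scaleR_2)
qed

lemma conv_C2:
  assumes "convex_operator T" "0 \<le> c" "c \<le> 1"
  shows "T x - T (x + c *\<^sub>R h) \<le> c *\<^sub>R (T (x - h) - T x)"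
proof -
  have "T x + T x \<le> T (x + c *\<^sub>R h) + T (x - c *\<^sub>R h)" by (rule conv_half[OF assms(1)])
  then have "T x - T (x + c *\<^sub>R h) \<le> T (x + c *\<^sub>R (-h)) - T x"
    by (simp add: algebra_simps le_diff_eq diff_le_eq)
  also have "\<dots> \<le> c *\<^sub>R (T (x + -h) - T x)" by (rule conv_C1[OF assms])
  finally show ?thesis by simp
qed

lemma lip_local:
  fixes T :: "'a::banach_lattice \<Rightarrow> 'a"
  assumes conv: "convex_operator T" and R: "R > 0"
    and bd: "\<And>w. norm (w - x) \<le> R \<Longrightarrow> norm (T w) \<le> M"
    and x': "norm (x' - x) \<le> R"
  shows "norm (T x' - T x) \<le> (4 * M / R) * norm (x' - x)"
proof (cases "x' = x")
  case True then show ?thesis by simp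
next
  case False
  define d where "d = norm (x' - x)"
  have d0: "d > 0" using False by (simp add: d_def)
  define h where "h = (R / d) *\<^sub>R (x' - x)"
  define c where "c = d / R"
  have c: "0 \<le> c" "c \<le> 1" using d0 R x' by (auto simp: c_def d_def)
  have xh: "x + c *\<^sub>R h = x'" using d0 R by (simp add: h_def c_def)
  have nh: "norm h = R" using d0 R by (simp add: h_def d_def)
  have b1: "norm (T (x + h)) \<le> M" by (rule bd) (simp add: nh)
  have b2: "norm (T (x - h)) \<le> M" by (rule bd) (simp add: nh)
  have b0: "norm (T x) \<le> M" by (rule bd) (use R in simp)
  have "norm (T x' - T x) \<le> norm (c *\<^sub>R (T (x + h) - T x)) + norm (c *\<^sub>R (T (x - h) - T x))"
    apply (rule bl_nb)
    using conv_C1[OF conv c, of x h] conv_C2[OF conv c, of x h] xh by simp_all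
  also have "\<dots> = c * (norm (T (x + h) - T x) + norm (T (x - h) - T x))"
    using c by (simp add: distrib_left)
  also have "\<dots> \<le> c * (4 * M)"
  proof (rule mult_left_mono[OF _ c(1)])
    have "norm (T (x + h) - T x) \<le> 2 * M" using norm_triangle_ineq4[of "T (x+h)" "T x"] b0 b1 by simp
    moreover have "norm (T (x - h) - T x) \<le> 2 * M" using norm_triangle_ineq4[of "T (x-h)" "T x"] b0 b2 by simp
    ultimately show "norm (T (x + h) - T x) + norm (T (x - h) - T x) \<le> 4 * M" by simp
  qed
  also have "\<dots> = (4*M/R) * d" using R by (simp add: c_def)
  finally show ?thesis by (simp add: d_def)
qed


lemma bd_op:
  assumes "bounded_operator T"
  shows "\<exists>C. \<forall>w. norm w \<le> r \<longrightarrow> norm (T w) \<le> C"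
proof -
  obtain C where "\<forall>w. norm w \<le> max r 1 \<longrightarrow> norm (T w) \<le> C"
    using assms unfolding bounded_operator_def by (metis max.strict_coboundedI2 zero_less_one)
  then show ?thesis by force
qed

lemma conv_cont:
  fixes T :: "'a::banach_lattice \<Rightarrow> 'a"
  assumes conv: "convex_operator T" and bd: "bounded_operator T"
  shows "continuous_on UNIV T"
  unfolding continuous_on_iff
proof (intro ballI allI impI)
  fix x :: 'a and e :: real
  assume e: "e > 0"
  obtain C where C: "\<And>w. norm w \<le> norm x + 1 \<Longrightarrow> norm (T w) \<le> C" using bd_op[OF bd] by blast
  have lip: "norm (T x' - T x) \<le> (4 * C / 1) * norm (x' - x)" if "norm (x' - x) \<le> 1" for x'
  proof (rule lip_local[OF conv])
    fix w assume "norm (w - x) \<le> 1"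
    then have "norm w \<le> norm x + 1" using norm_triangle_sub[of w x] by simp
    then show "norm (T w) \<le> C" by (rule C)
  qed (use that in auto)
  define K where "K = 4 * \<bar>C\<bar> + 1"
  have K: "K > 0" by (simp add: K_def)
  show "\<exists>d>0. \<forall>x'\<in>UNIV. dist x' x < d \<longrightarrow> dist (T x') (T x) < e"
  proof (intro exI[of _ "min 1 (e / K)"] conjI ballI impI)
    show "min 1 (e / K) > 0" using e K by simp
    fix x' assume "dist x' x < min 1 (e / K)"
    then have d: "norm (x' - x) < 1" "norm (x' - x) < e / K" by (auto simp: dist_norm)
    have "norm (T x' - T x) \<le> 4 * C * norm (x' - x)" using lip d by simp
    also have "\<dots> \<le> K * norm (x' - x)" unfolding K_def by (intro mult_right_mono) auto
    also have "\<dots> < K * (e / K)" using d K by (intro mult_strict_left_mono) auto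
    also have "\<dots> = e" using K by simp
    finally show "dist (T x') (T x) < e" by (simp add: dist_norm)
  qed
qed

lemma sgD:
  assumes "convex_C0_semigroup S"
  shows "\<And>t. t \<ge> 0 \<Longrightarrow> convex_operator (S t)" "\<And>t. t \<ge> 0 \<Longrightarrow> bounded_operator (S t)" "S 0 = id"
    "\<And>s t. s \<ge> 0 \<Longrightarrow> t \<ge> 0 \<Longrightarrow> S (t + s) x = S t (S s x)" "((\<lambda>t. S t x) \<longlongrightarrow> x) (at_right 0)"
  using assms unfolding convex_C0_semigroup_def by (auto simp: fun_eq_iff)

lemma sc_eps:
  assumes sg: "convex_C0_semigroup S" and e: "e > 0"
  shows "\<exists>d>0. \<forall>h. 0 \<le> h \<and> h < d \<longrightarrow> norm (S h z - z) < e"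
proof -
  have "eventually (\<lambda>h. dist (S h z) z < e) (at_right 0)"
    using sgD(5)[OF sg, of z] e by (simp add: tendsto_iff)
  then obtain b where b: "b > 0" "\<And>h. h > 0 \<Longrightarrow> h < b \<Longrightarrow> dist (S h z) z < e"
    unfolding eventually_at_right_field by auto
  show ?thesis
  proof (intro exI[of _ b] conjI allI impI)
    fix h assume h: "0 \<le> h \<and> h < b"
    show "norm (S h z - z) < e"
    proof (cases "h = 0")
      case True then show ?thesis using e sgD(3)[OF sg] by simp
    next
      case False then show ?thesis using b(2)[of h] h by (simp add: dist_norm)
    qed
  qed (use b in auto)
qed

lemma orbit_bound:
  assumes sg: "convex_C0_semigroup S" and t: "t \<ge> 0"
  shows "\<exists>P. \<forall>r\<in>{0..t}. norm (S r u) \<le> P"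
proof -
  obtain \<delta> where \<delta>: "\<delta> > 0" "\<And>h. 0 \<le> h \<Longrightarrow> h < \<delta> \<Longrightarrow> norm (S h u - u) < 1"
    using sc_eps[OF sg, of 1 u] by auto
  define e where "e = \<delta>/2"
  have e: "e > 0" using \<delta> by (simp add: e_def)
  have small: "norm (S h u) \<le> norm u + 1" if "0 \<le> h" "h \<le> e" for h
  proof -
    have "norm (S h u - u) < 1" using \<delta>(2)[of h] that \<delta> by (simp add: e_def)
    then show ?thesis using norm_triangle_sub[of "S h u" u] by simp
  qed
  have "\<exists>B. \<forall>r\<in>{0..real n * e}. norm (S r u) \<le> B" for n
  proof (induction n)
    case 0 then show ?case using sgD(3)[OF sg] by auto
  next
    case (Suc n)
    then obtain B where B: "\<forall>r\<in>{0..real n * e}. norm (S r u) \<le> B" by auto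
    obtain C where C: "\<And>w. norm w \<le> norm u + 1 \<Longrightarrow> norm (S (real n * e) w) \<le> C"
      using bd_op[OF sgD(2)[OF sg, of "real n * e"]] e by auto
    have "\<forall>r\<in>{0..real (Suc n) * e}. norm (S r u) \<le> max B C"
    proof
      fix r assume r: "r \<in> {0..real (Suc n) * e}"
      show "norm (S r u) \<le> max B C"
      proof (cases "r \<le> real n * e")
        case True then show ?thesis using B r by force
      next
        case False
        have "S r u = S (real n * e) (S (r - real n * e) u)"
          using sgD(4)[OF sg, of "r - real n*e" "real n * e"] False e by simp
        moreover have "norm (S (r - real n * e) u) \<le> norm u + 1"
          using small False r by (simp add: algebra_simps)
        ultimately show ?thesis using C by force
      qed
    qed
    then show ?case by blast
  qed
  moreover obtain n :: nat where "t / e \<le> real n" using real_arch_simple by blast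
  then have "t \<le> real n * e" using e by (simp add: field_simps)
  ultimately show ?thesis by (meson atLeastAtMost_iff order_trans)
qed


lemma baire_ball:
  fixes S :: "real \<Rightarrow> 'a::banach_lattice \<Rightarrow> 'a"
  assumes sg: "convex_C0_semigroup S" and t: "t \<ge> 0"
  shows "\<exists>x0 \<rho>0 M. \<rho>0 > 0 \<and> (\<forall>r\<in>{0..t}. \<forall>w. norm (w - x0) \<le> \<rho>0 \<longrightarrow> norm (S r w) \<le> M)"
proof -
  define F where "F n = (\<Inter>r\<in>{0..t}. {x. norm (S r x) \<le> real n})" for n :: nat
  have clo: "closed (F n)" for n
    unfolding F_def
  proof (intro closed_INT ballI)
    fix r assume "r \<in> {0..t}"
    then have "continuous_on UNIV (S r)" using conv_cont sgD(1,2)[OF sg] by auto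
    then show "closed {x. norm (S r x) \<le> real n}"
      by (intro closed_Collect_le continuous_intros) auto
  qed
  have cover: "\<Union>(range F) = UNIV"
  proof -
    { fix x
      obtain P where P: "\<forall>r\<in>{0..t}. norm (S r x) \<le> P" using orbit_bound[OF sg t] by blast
      obtain n::nat where "P \<le> real n" using real_arch_simple by blast
      then have "x \<in> F n" using P by (force simp: F_def) 
      then have "x \<in> \<Union>(range F)" by blast }
    then show ?thesis by blast
  qed
  have "\<exists>n. interior (F n) \<noteq> {}"
  proof (rule ccontr)
    assume "\<not> ?thesis"
    then have "euclidean interior_of \<Union>(range F) = {}"
      apply (intro Baire_category_alt)
      using completely_metrizable_space_euclidean apply blast
      by (auto simp: clo)
    then show False using cover by simp
  qed
  then obtain n x0 where "x0 \<in> interior (F n)" by blast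
  then obtain e where e: "e > 0" "cball x0 e \<subseteq> F n" using mem_interior_cball by blast
  have "\<forall>r\<in>{0..t}. \<forall>w. norm (w - x0) \<le> e \<longrightarrow> norm (S r w) \<le> real n"
  proof (intro ballI allI impI)
    fix r w assume r: "r \<in> {0..t}" and w: "norm (w - x0) \<le> e"
    then have "w \<in> F n" using e by (auto simp: dist_norm norm_minus_commute)
    then show "norm (S r w) \<le> real n" using r by (auto simp: F_def)
  qed
  then show ?thesis using e(1) by blast
qed

lemma ub_at:
  fixes S :: "real \<Rightarrow> 'a::banach_lattice \<Rightarrow> 'a"
  assumes sg: "convex_C0_semigroup S" and t: "t \<ge> 0"
  shows "\<exists>\<rho>>0. \<exists>M. \<forall>r\<in>{0..t}. \<forall>w. norm (w - z) \<le> \<rho> \<longrightarrow> norm (S r w) \<le> M"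
proof -
  obtain x0 \<rho>0 N where \<rho>0: "\<rho>0 > 0"
    and N: "\<And>r w. r \<in> {0..t} \<Longrightarrow> norm (w - x0) \<le> \<rho>0 \<Longrightarrow> norm (S r w) \<le> N"
    using baire_ball[OF sg t] by blast
  define u where "u = 2 *\<^sub>R z - x0"
  obtain Pu where Pu: "\<And>r. r\<in>{0..t} \<Longrightarrow> norm (S r u) \<le> Pu" using orbit_bound[OF sg t, of u] by blast
  obtain Pz where Pz: "\<And>r. r\<in>{0..t} \<Longrightarrow> norm (S r z) \<le> Pz" using orbit_bound[OF sg t, of z] by blast
  define U where "U r w = (1/2) *\<^sub>R S r u + (1/2) *\<^sub>R S r (x0 + 2 *\<^sub>R (w - z))" for r w
  have up: "S r w \<le> U r w" "norm (U r w) \<le> (Pu + N)/2"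
    if r: "r \<in> {0..t}" and w: "norm (w - z) \<le> \<rho>0/2" for r w
  proof -
    have "w = (1/2) *\<^sub>R u + (1 - 1/2) *\<^sub>R (x0 + 2 *\<^sub>R (w - z))"
      by (simp add: u_def algebra_simps)
    then have "S r w = S r ((1/2) *\<^sub>R u + (1 - 1/2) *\<^sub>R (x0 + 2 *\<^sub>R (w - z)))" by simp
    also have "\<dots> \<le> (1/2) *\<^sub>R S r u + (1 - 1/2) *\<^sub>R S r (x0 + 2 *\<^sub>R (w - z))"
      by (rule conv_app) (use sgD(1)[OF sg] r in auto)
    finally show "S r w \<le> U r w" by (simp add: U_def)
    have "norm (x0 + 2 *\<^sub>R (w - z) - x0) \<le> \<rho>0" using w by simp
    then have "norm (S r (x0 + 2 *\<^sub>R (w - z))) \<le> N" using N r by blast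
    then show "norm (U r w) \<le> (Pu + N)/2"
      unfolding U_def using norm_triangle_ineq[of "(1/2) *\<^sub>R S r u" "(1/2) *\<^sub>R S r (x0 + 2 *\<^sub>R (w - z))"]
        Pu[OF r] by simp
  qed
  have "\<forall>r\<in>{0..t}. \<forall>w. norm (w - z) \<le> \<rho>0/2 \<longrightarrow> norm (S r w) \<le> (Pu + N) + 2 * Pz"
  proof (intro ballI allI impI)
    fix r w assume r: "r \<in> {0..t}" and w: "norm (w - z) \<le> \<rho>0/2"
    define w' where "w' = 2 *\<^sub>R z - w"
    have w': "norm (w' - z) \<le> \<rho>0/2" proof -
      have "w' - z = -(w - z)" by (simp add: w'_def algebra_simps scaleR_2)
      then show ?thesis using w by (simp add: norm_minus_commute)
    qed
    have "S r ((1/2) *\<^sub>R w + (1 - 1/2) *\<^sub>R w') \<le> (1/2) *\<^sub>R S r w + (1 - 1/2) *\<^sub>R S r w'"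
      by (rule conv_app) (use sgD(1)[OF sg] r in auto)
    moreover have "(1/2) *\<^sub>R w + (1 - 1/2) *\<^sub>R w' = z" by (simp add: w'_def algebra_simps)
    ultimately have "S r z \<le> (1/2) *\<^sub>R (S r w + S r w')" by (simp add: scaleR_right_distrib)
    then have "2 *\<^sub>R S r z \<le> (2::real) *\<^sub>R ((1/2) *\<^sub>R (S r w + S r w'))"
      by (rule scaleR_left_mono) auto
    then have "2 *\<^sub>R S r z \<le> S r w + S r w'" by simp
    then have "- S r w \<le> S r w' - 2 *\<^sub>R S r z" by (simp add: algebra_simps le_diff_eq)
    also have "\<dots> \<le> U r w' - 2 *\<^sub>R S r z" using up(1)[OF r w'] by (rule diff_right_mono)
    finally have lo: "- S r w \<le> U r w' - 2 *\<^sub>R S r z" .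
    have "norm (S r w) \<le> norm (U r w) + norm (U r w' - 2 *\<^sub>R S r z)"
      by (rule bl_nb[OF up(1)[OF r w] lo])
    also have "\<dots> \<le> (Pu + N)/2 + ((Pu + N)/2 + 2 * Pz)"
    proof (rule add_mono[OF up(2)[OF r w]])
      have "norm (U r w' - 2 *\<^sub>R S r z) \<le> norm (U r w') + norm (2 *\<^sub>R S r z)" by (rule norm_triangle_ineq4)
      then show "norm (U r w' - 2 *\<^sub>R S r z) \<le> (Pu + N)/2 + 2 * Pz" using up(2)[OF r w'] Pz[OF r] by (simp only: norm_scaleR)
    qed
    finally show "norm (S r w) \<le> (Pu + N) + 2 * Pz" by simp
  qed
  then show ?thesis using \<rho>0 by (intro exI[of _ "\<rho>0/2"]) auto
qed

lemma ulip:
  fixes S :: "real \<Rightarrow> 'a::banach_lattice \<Rightarrow> 'a"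
  assumes sg: "convex_C0_semigroup S" and t: "t \<ge> 0"
  shows "\<exists>\<rho>>0. \<exists>L>0. \<forall>r\<in>{0..t}. \<forall>x' x''. norm (x' - z) \<le> \<rho> \<longrightarrow> norm (x'' - z) \<le> \<rho> \<longrightarrow>
            norm (S r x' - S r x'') \<le> L * norm (x' - x'')"
proof -
  obtain \<rho>0 M where \<rho>0: "\<rho>0 > 0" and bd: "\<And>r w. r\<in>{0..t} \<Longrightarrow> norm (w - z) \<le> \<rho>0 \<Longrightarrow> norm (S r w) \<le> M"
    using ub_at[OF sg t, of z] by blast
  define \<rho> where "\<rho> = \<rho>0 / 3"
  have \<rho>: "\<rho> > 0" using \<rho>0 by (simp add: \<rho>_def)
  define L where "L = \<bar>4 * M / (2 * \<rho>)\<bar> + 1"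
  have L0: "L > 0" by (simp add: L_def add_nonneg_pos)
  have "\<forall>r\<in>{0..t}. \<forall>x' x''. norm (x' - z) \<le> \<rho> \<longrightarrow> norm (x'' - z) \<le> \<rho> \<longrightarrow>
            norm (S r x' - S r x'') \<le> L * norm (x' - x'')"
  proof (intro ballI allI impI)
    fix r x' x'' assume r: "r \<in> {0..t}" and x': "norm (x' - z) \<le> \<rho>" and x'': "norm (x'' - z) \<le> \<rho>"
    have "norm (S r x' - S r x'') \<le> (4 * M / (2 * \<rho>)) * norm (x' - x'')"
    proof (rule lip_local)
      show "convex_operator (S r)" using sgD(1)[OF sg] r by auto
      show "2 * \<rho> > 0" using \<rho> by simp
      fix w assume "norm (w - x'') \<le> 2 * \<rho>"
      then have "norm (w - z) \<le> \<rho>0"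
        using norm_triangle_ineq[of "w - x''" "x'' - z"] x'' by (simp add: \<rho>_def)
      then show "norm (S r w) \<le> M" using bd r by blast
    next
      show "norm (x' - x'') \<le> 2 * \<rho>"
        using norm_triangle_ineq4[of "x' - z" "x'' - z"] x' x'' by simp
    qed
    also have "\<dots> \<le> L * norm (x' - x'')"
      unfolding L_def using abs_ge_self[of "4 * M / (2 * \<rho>)"] by (intro mult_right_mono) auto
    finally show "norm (S r x' - S r x'') \<le> L * norm (x' - x'')" .
  qed
  then show ?thesis using \<rho> L0 by blast
qed

lemma orbit_cont:
  fixes S :: "real \<Rightarrow> 'a::banach_lattice \<Rightarrow> 'a"
  assumes sg: "convex_C0_semigroup S" and t: "t \<ge> 0" and r0: "r0 \<in> {0..t}" and e: "e > 0"
  shows "\<exists>d>0. \<forall>r\<in>{0..t}. \<bar>r - r0\<bar> < d \<longrightarrow> norm (S r z - S r0 z) < e"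
proof -
  obtain \<rho> L where \<rho>: "\<rho> > 0" and L: "L > 0" and lip: "\<And>r x' x''. r\<in>{0..t} \<Longrightarrow> norm (x' - z) \<le> \<rho> \<Longrightarrow>
      norm (x'' - z) \<le> \<rho> \<Longrightarrow> norm (S r x' - S r x'') \<le> L * norm (x' - x'')"
    using ulip[OF sg t, of z] by blast
  obtain d where d: "d > 0" "\<And>h. 0 \<le> h \<Longrightarrow> h < d \<Longrightarrow> norm (S h z - z) < min \<rho> (e / L)"
    using sc_eps[OF sg, of "min \<rho> (e / L)" z] \<rho> L e by auto
  have key: "norm (S q (S h z) - S q z) < e" if q: "q \<in> {0..t}" and h: "0 \<le> h" "h < d" for q h
  proof -
    have "norm (S q (S h z) - S q z) \<le> L * norm (S h z - z)"
      using lip[OF q, of "S h z" z] d(2)[OF h] \<rho> by simp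
    also have "\<dots> < L * (e / L)" using d(2)[OF h] L by (intro mult_strict_left_mono) auto
    finally show ?thesis using L by simp
  qed
  show ?thesis
  proof (intro exI[of _ d] conjI ballI impI)
    fix r assume r: "r \<in> {0..t}" and rd: "\<bar>r - r0\<bar> < d"
    show "norm (S r z - S r0 z) < e"
    proof (cases "r0 \<le> r")
      case True
      have "S r z = S r0 (S (r - r0) z)" using sgD(4)[OF sg, of "r - r0" r0] True r0 by simp
      then show ?thesis using key[OF r0, of "r - r0"] True rd by simp
    next
      case False
      have "S r0 z = S r (S (r0 - r) z)" using sgD(4)[OF sg, of "r0 - r" r] False r by simp
      then show ?thesis using key[OF r, of "r0 - r"] False rd by (simp add: norm_minus_commute)
    qed
  qed (use d in auto)
qed


lemma rd_const:
  fixes f :: "real \<Rightarrow> 'b::real_normed_vector"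
  assumes ab: "a \<le> b" and cont: "continuous_on {a..b} f"
    and rd: "\<And>s e. s \<in> {a..<b} \<Longrightarrow> e > 0 \<Longrightarrow> \<exists>d>0. \<forall>h. 0 < h \<and> h < d \<longrightarrow> norm (f (s + h) - f s) \<le> e * h"
  shows "f b = f a"
proof -
  have bnd: "norm (f b - f a) \<le> e * (b - a)" if e: "e > 0" for e
  proof -
    define E where "E = {s\<in>{a..b}. norm (f s - f a) \<le> e * (s - a)}"
    have "E = {a..b} \<inter> (\<lambda>s. norm (f s - f a) - e * (s - a)) -` {..0}"
      by (auto simp: E_def)
    moreover have "continuous_on {a..b} (\<lambda>s. norm (f s - f a) - e * (s - a))"
      by (intro continuous_intros cont)
    ultimately have cl: "closed E" by (metis closed_atLeastAtMost closed_atMost continuous_closed_preimage)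
    have aE: "a \<in> E" using ab by (simp add: E_def)
    have bdd: "bdd_above E" by (rule bdd_aboveI[of _ b]) (auto simp: E_def)
    define c where "c = Sup E"
    have cE: "c \<in> E" unfolding c_def using closed_contains_Sup[OF _ bdd cl] aE by blast
    have "c = b"
    proof (rule ccontr)
      assume "c \<noteq> b"
      then have cb: "c < b" "a \<le> c" using cE by (auto simp: E_def)
      obtain d where d: "d > 0" "\<And>h. 0 < h \<Longrightarrow> h < d \<Longrightarrow> norm (f (c + h) - f c) \<le> e * h"
        using rd[of c e] cb e by auto
      define h where "h = min (d/2) (b - c)"
      have h: "0 < h" "h < d" "c + h \<le> b" using d cb by (auto simp: h_def)
      have "norm (f (c + h) - f a) \<le> norm (f (c + h) - f c) + norm (f c - f a)"
        using norm_triangle_ineq[of "f (c + h) - f c" "f c - f a"] by simp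
      also have "\<dots> \<le> e * h + e * (c - a)" using d(2)[OF h(1,2)] cE by (intro add_mono) (auto simp: E_def)
      finally have "c + h \<in> E" using h cb by (auto simp: E_def algebra_simps)
      then have "c + h \<le> c" unfolding c_def by (rule cSup_upper[OF _ bdd])
      then show False using h by simp
    qed
    then show ?thesis using cE by (simp add: E_def)
  qed
  show ?thesis
  proof (rule ccontr)
    assume "f b \<noteq> f a"
    then have n: "norm (f b - f a) > 0" by simp
    have "norm (f b - f a) \<le> (norm (f b - f a) / (b - a + 1)) * (b - a)"
      using bnd[of "norm (f b - f a) / (b - a + 1)"] n ab by simp
    also have "\<dots> < norm (f b - f a)"
    proof -
      have "(b - a) / (b - a + 1) < 1" using ab by simp
      then have "norm (f b - f a) * ((b - a) / (b - a + 1)) < norm (f b - f a) * 1"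
        using n by (intro mult_strict_left_mono) auto
      then show ?thesis by simp
    qed
    finally show False by simp
  qed
qed

theorem theorem3p5:
  fixes S :: "real \<Rightarrow> 'a::banach_lattice \<Rightarrow> 'a"
    and y :: "real \<Rightarrow> 'a"
  assumes "order_continuous_norm TYPE('a)"
    and "convex_C0_semigroup S"
    and "continuous_on {0..} y"
    and "\<And>t. t \<ge> 0 \<Longrightarrow> y t \<in> gen_domain S"
    and "\<And>t. t \<ge> 0 \<Longrightarrow>
           ((\<lambda>h. (1 / h) *\<^sub>R (y (t + h) - y t)) \<longlongrightarrow> generator S (y t)) (at_right 0)"
  shows "\<forall>t\<ge>0. y t = S t (y 0)"
proof (intro allI impI)
  fix t :: real assume t: "t \<ge> 0"
  note sg = assms(2)
  define \<phi> where "\<phi> s = S (t - s) (y s)" for s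
  have ycont: "\<exists>d>0. \<forall>s'\<in>{0..}. dist s' s < d \<longrightarrow> dist (y s') (y s) < e" if "s \<ge> 0" "e > 0" for s e
    using assms(3) that unfolding continuous_on_iff by auto
  have cont: "continuous_on {0..t} \<phi>"
    unfolding continuous_on_iff
  proof (intro ballI allI impI)
    fix s e assume s: "s \<in> {0..t}" and e: "(e::real) > 0"
    obtain \<rho> L where \<rho>: "\<rho> > 0" and L: "L > 0" and lip: "\<And>r x' x''. r\<in>{0..t} \<Longrightarrow> norm (x' - y s) \<le> \<rho> \<Longrightarrow>
      norm (x'' - y s) \<le> \<rho> \<Longrightarrow> norm (S r x' - S r x'') \<le> L * norm (x' - x'')"
      using ulip[OF sg t, of "y s"] by blast
    obtain d1 where d1: "d1 > 0" "\<And>s'. s' \<in> {0..} \<Longrightarrow> dist s' s < d1 \<Longrightarrow> dist (y s') (y s) < min \<rho> (e / (2 * L))"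
      using ycont[of s "min \<rho> (e / (2 * L))"] s \<rho> L e by auto
    obtain d2 where d2: "d2 > 0" "\<And>r. r\<in>{0..t} \<Longrightarrow> \<bar>r - (t - s)\<bar> < d2 \<Longrightarrow> norm (S r (y s) - S (t - s) (y s)) < e / 2"
      using orbit_cont[OF sg t, of "t - s" "e/2" "y s"] s e by auto
    show "\<exists>d>0. \<forall>s'\<in>{0..t}. dist s' s < d \<longrightarrow> dist (\<phi> s') (\<phi> s) < e"
    proof (intro exI[of _ "min d1 d2"] conjI ballI impI)
      show "min d1 d2 > 0" using d1 d2 by simp
      fix s' assume s': "s' \<in> {0..t}" and ds: "dist s' s < min d1 d2"
      have yd: "norm (y s' - y s) < min \<rho> (e / (2 * L))" using d1(2)[of s'] s' ds by (simp add: dist_norm)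
      have r: "t - s' \<in> {0..t}" using s' by auto
      have "norm (S (t - s') (y s') - S (t - s') (y s)) \<le> L * norm (y s' - y s)"
        using lip[OF r, of "y s'" "y s"] yd \<rho> by simp
      also have "\<dots> < L * (e / (2 * L))" using yd L by (intro mult_strict_left_mono) auto
      also have "\<dots> = e / 2" using L by simp
      finally have A: "norm (S (t - s') (y s') - S (t - s') (y s)) < e / 2" .
      have B: "norm (S (t - s') (y s) - S (t - s) (y s)) < e / 2"
        using d2(2)[OF r] ds by (simp add: dist_real_def abs_minus_commute)
      have "norm (\<phi> s' - \<phi> s) \<le> norm (S (t - s') (y s') - S (t - s') (y s)) + norm (S (t - s') (y s) - S (t - s) (y s))"
        unfolding \<phi>_def by (rule norm_diff_triangle_ineq[THEN order_trans[rotated]]) (simp add: algebra_simps)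
      then show "dist (\<phi> s') (\<phi> s) < e" using A B by (simp add: dist_norm)
    qed
  qed
  have deriv: "\<exists>d>0. \<forall>h. 0 < h \<and> h < d \<longrightarrow> norm (\<phi> (s + h) - \<phi> s) \<le> e * h"
    if s: "s \<in> {0..<t}" and e: "e > 0" for s e
  proof -
    define z where "z = y s"
    obtain \<rho> L where \<rho>: "\<rho> > 0" and L: "L > 0" and lip: "\<And>r x' x''. r\<in>{0..t} \<Longrightarrow> norm (x' - z) \<le> \<rho> \<Longrightarrow>
      norm (x'' - z) \<le> \<rho> \<Longrightarrow> norm (S r x' - S r x'') \<le> L * norm (x' - x'')"
      using ulip[OF sg t, of z] by blast
    have lim1: "((\<lambda>h. (1/h) *\<^sub>R (y (s+h) - z)) \<longlongrightarrow> generator S z) (at_right 0)"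
      using assms(5)[of s] s by (simp add: z_def)
    obtain G where G: "((\<lambda>h. (1 / h) *\<^sub>R (S h z - z)) \<longlongrightarrow> G) (at_right 0)"
      using assms(4)[of s] s unfolding gen_domain_def z_def by auto
    have "generator S z = G" unfolding generator_def using G by (rule tendsto_Lim[rotated]) simp
    then have lim2: "((\<lambda>h. (1 / h) *\<^sub>R (S h z - z)) \<longlongrightarrow> generator S z) (at_right 0)" using G by simp
    have "((\<lambda>h. (1/h) *\<^sub>R (y (s+h) - z) - (1 / h) *\<^sub>R (S h z - z)) \<longlongrightarrow> 0) (at_right 0)"
      using tendsto_diff[OF lim1 lim2] by simp
    then have "eventually (\<lambda>h. dist ((1/h) *\<^sub>R (y (s+h) - z) - (1 / h) *\<^sub>R (S h z - z)) 0 < e / L) (at_right 0)"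
      using e L by (simp add: tendsto_iff)
    then obtain d1 where d1: "d1 > 0"
      "\<And>h. h > 0 \<Longrightarrow> h < d1 \<Longrightarrow> norm ((1/h) *\<^sub>R (y (s+h) - z) - (1 / h) *\<^sub>R (S h z - z)) < e / L"
      unfolding eventually_at_right_field by auto
    obtain d2 where d2: "d2 > 0" "\<And>s'. s' \<in> {0..} \<Longrightarrow> dist s' s < d2 \<Longrightarrow> dist (y s') (y s) < \<rho>"
      using ycont[of s \<rho>] s \<rho> by auto
    obtain d3 where d3: "d3 > 0" "\<And>h. 0 \<le> h \<Longrightarrow> h < d3 \<Longrightarrow> norm (S h z - z) < \<rho>"
      using sc_eps[OF sg \<rho>, of z] by auto
    show ?thesis
    proof (intro exI[of _ "min (min d1 d2) (min d3 (t - s))"] conjI allI impI)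
      show "min (min d1 d2) (min d3 (t - s)) > 0" using d1 d2 d3 s by auto
      fix h assume h: "0 < h \<and> h < min (min d1 d2) (min d3 (t - s))"
      have r: "t - s - h \<in> {0..t}" using h s by auto
      have "\<phi> s = S (t - s - h) (S h z)"
        using sgD(4)[OF sg, of h "t - s - h" z] h by (simp add: \<phi>_def z_def)
      moreover have "\<phi> (s + h) = S (t - s - h) (y (s + h))" by (simp add: \<phi>_def algebra_simps)
      ultimately have "norm (\<phi> (s + h) - \<phi> s) \<le> L * norm (y (s + h) - S h z)"
        using lip[OF r, of "y (s + h)" "S h z"] d2(2)[of "s + h"] d3(2)[of h] h s
        by (simp add: dist_norm z_def less_imp_le)
      also have "y (s + h) - S h z = h *\<^sub>R ((1/h) *\<^sub>R (y (s+h) - z) - (1 / h) *\<^sub>R (S h z - z))"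
        using h by (simp add: algebra_simps)
      also have "L * norm (h *\<^sub>R ((1/h) *\<^sub>R (y (s+h) - z) - (1 / h) *\<^sub>R (S h z - z))) \<le> L * (h * (e / L))"
      proof (rule mult_left_mono[OF _ less_imp_le[OF L]])
        have nb: "norm ((1/h) *\<^sub>R (y (s+h) - z) - (1 / h) *\<^sub>R (S h z - z)) \<le> e / L"
          using d1(2)[of h] h by simp
        then show "norm (h *\<^sub>R ((1/h) *\<^sub>R (y (s+h) - z) - (1 / h) *\<^sub>R (S h z - z))) \<le> h * (e / L)"
          using h mult_left_mono[OF nb, of h] by (simp add: abs_of_pos)
      qed
      also have "\<dots> = e * h" using L by simp
      finally show "norm (\<phi> (s + h) - \<phi> s) \<le> e * h" .
    qed
  qed
  have "\<phi> t = \<phi> 0" by (rule rd_const[OF t cont deriv]) auto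
  then show "y t = S t (y 0)" by (simp add: \<phi>_def sgD(3)[OF sg])
qed

end
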